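(* Let $X$ be a finite discrete space with at least two elements, $\Gamma$ a nonempty countable set, $\varphi:\Gamma\to\Gamma$ a map, and $d$ a compatible metric on $X^\Gamma$. For each $x=(x_\alpha)\in X^\Gamma$ choose $y^x=(y^x_\alpha)\in X^\Gamma$ such that $\{\alpha\in\Gamma:x_\alpha\neq y^x_\alpha\}$ is a finite set of non-quasi-periodic points of $\varphi$. Let $D\subseteq X^\Gamma$ and $u,v\in X^\Gamma$. Then: (1) $F^*_{uv}(t)=1$ for all $t>0$ iff $F^*_{y^uy^v}(t)=1$ for all $t>0$; (2) there is $t>0$ with $F_{xz}(t)=0$ for all distinct $x,z\in D$ iff there is $t>0$ with $F_{y^xy^z}(t)=0$ for all distinct $x,z\in D$; (3) there is $t>0$ with $F_{xz}(t)<1$ for all distinct $x,z\in D$ iff there is $t>0$ with $F_{y^xy^z}(t)<1$ for all distinct $x,z\in D$. In particular, for $i\in\{1,2\}$, $D$ is a distributional scrambled set of type $i$ iff $\{y^x:x\in D\}$ is a distributional scrambled set of type $i$.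
   Context: $X^\Gamma$ has the product topology; $\sigma_\varphi((x_\alpha)_{\alpha\in\Gamma})=(x_{\varphi(\alpha)})_{\alpha\in\Gamma}$. A point $\theta\in\Gamma$ is non-quasi-periodic if $\{\varphi^n(\theta):n\ge0\}$ is infinite. With $f=\sigma_\varphi$, $\xi(x,y,t,n)=\#\{i\in\{0,\dots,n-1\}:d(f^i(x),f^i(y))<t\}$, $F_{xy}(t)=\liminf_n\xi(x,y,t,n)/n$, $F^*_{xy}(t)=\limsup_n\xi(x,y,t,n)/n$. A pair $x,y$ is distributional scrambled of type 1 if there is $s>0$ with $F_{xy}(s)=0$ and $F^*_{xy}(s)=1$ for all $s>0$; of type 2 if there is $s>0$ with $F_{xy}(s)<1$ and $F^*_{xy}(s)=1$ for all $s>0$. A set with at least two elements is distributional scrambled of type $i$ if every pair of its distinct points is. *)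

theory Defs
  imports "HOL-Analysis.Analysis"
begin

abbreviation full_space :: "'g set \<Rightarrow> 'a set \<Rightarrow> ('g \<Rightarrow> 'a) set" where
  "full_space \<Gamma> X \<equiv> PiE \<Gamma> (\<lambda>_. X)"

definition compatible_metric ::
  "'g set \<Rightarrow> 'a set \<Rightarrow> (('g \<Rightarrow> 'a) \<Rightarrow> ('g \<Rightarrow> 'a) \<Rightarrow> real) \<Rightarrow> bool" where
  "compatible_metric \<Gamma> X d \<longleftrightarrow>
     Metric_space (full_space \<Gamma> X) d \<and>
     Metric_space.mtopology (full_space \<Gamma> X) d = product_topology (\<lambda>_. discrete_topology X) \<Gamma>"

definition gshift :: "'g set \<Rightarrow> ('g \<Rightarrow> 'g) \<Rightarrow> ('g \<Rightarrow> 'a) \<Rightarrow> ('g \<Rightarrow> 'a)" where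
  "gshift \<Gamma> \<phi> x = (\<lambda>\<alpha>. if \<alpha> \<in> \<Gamma> then x (\<phi> \<alpha>) else undefined)"

definition non_quasi_periodic :: "('g \<Rightarrow> 'g) \<Rightarrow> 'g \<Rightarrow> bool" where
  "non_quasi_periodic \<phi> \<theta> \<longleftrightarrow> infinite {(\<phi> ^^ n) \<theta> | n. True}"

definition xi :: "('b \<Rightarrow> 'b) \<Rightarrow> ('b \<Rightarrow> 'b \<Rightarrow> real) \<Rightarrow> 'b \<Rightarrow> 'b \<Rightarrow> real \<Rightarrow> nat \<Rightarrow> nat" where
  "xi f d x y t n = card {i \<in> {0..<n}. d ((f ^^ i) x) ((f ^^ i) y) < t}"

definition Flow :: "('b \<Rightarrow> 'b) \<Rightarrow> ('b \<Rightarrow> 'b \<Rightarrow> real) \<Rightarrow> 'b \<Rightarrow> 'b \<Rightarrow> real \<Rightarrow> ereal" where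
  "Flow f d x y t = liminf (\<lambda>n. ereal (real (xi f d x y t n) / real n))"

definition Fup :: "('b \<Rightarrow> 'b) \<Rightarrow> ('b \<Rightarrow> 'b \<Rightarrow> real) \<Rightarrow> 'b \<Rightarrow> 'b \<Rightarrow> real \<Rightarrow> ereal" where
  "Fup f d x y t = limsup (\<lambda>n. ereal (real (xi f d x y t n) / real n))"

definition DS1_pair :: "('b \<Rightarrow> 'b) \<Rightarrow> ('b \<Rightarrow> 'b \<Rightarrow> real) \<Rightarrow> 'b \<Rightarrow> 'b \<Rightarrow> bool" where
  "DS1_pair f d x y \<longleftrightarrow> (\<exists>s>0. Flow f d x y s = 0) \<and> (\<forall>s>0. Fup f d x y s = 1)"

definition DS2_pair :: "('b \<Rightarrow> 'b) \<Rightarrow> ('b \<Rightarrow> 'b \<Rightarrow> real) \<Rightarrow> 'b \<Rightarrow> 'b \<Rightarrow> bool" where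
  "DS2_pair f d x y \<longleftrightarrow> (\<exists>s>0. Flow f d x y s < 1) \<and> (\<forall>s>0. Fup f d x y s = 1)"

definition DS1_set :: "('b \<Rightarrow> 'b) \<Rightarrow> ('b \<Rightarrow> 'b \<Rightarrow> real) \<Rightarrow> 'b set \<Rightarrow> bool" where
  "DS1_set f d D \<longleftrightarrow> (\<exists>x\<in>D. \<exists>y\<in>D. x \<noteq> y) \<and> (\<forall>x\<in>D. \<forall>y\<in>D. x \<noteq> y \<longrightarrow> DS1_pair f d x y)"

definition DS2_set :: "('b \<Rightarrow> 'b) \<Rightarrow> ('b \<Rightarrow> 'b \<Rightarrow> real) \<Rightarrow> 'b set \<Rightarrow> bool" where
  "DS2_set f d D \<longleftrightarrow> (\<exists>x\<in>D. \<exists>y\<in>D. x \<noteq> y) \<and> (\<forall>x\<in>D. \<forall>y\<in>D. x \<noteq> y \<longrightarrow> DS2_pair f d x y)"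

end

theory Submission
  imports Defs
begin


lemma limitin_discrete_ev:
  assumes "l \<in> X" "eventually (\<lambda>n. f n = l) F"
  shows "limitin (discrete_topology X) f l F"
  unfolding limitin_def using assms by (auto elim: eventually_mono)

lemma limitin_discrete_ev2:
  assumes "limitin (discrete_topology X) f l F"
  shows "l \<in> X \<and> eventually (\<lambda>n. f n = l) F"
proof -
  have l: "l \<in> X" using assms by (simp add: limitin_def)
  then have "openin (discrete_topology X) {l}" by simp
  then have "eventually (\<lambda>n. f n \<in> {l}) F" using assms l unfolding limitin_def by blast
  then show ?thesis using l by simp
qed

lemma limitin_prod_comp:
  assumes "limitin (product_topology T I) f l F" "i \<in> I"
  shows "limitin (T i) (\<lambda>c. f c i) (l i) F"
proof -
  note h = limitin_componentwise[THEN iffD1, OF assms(1)]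
  have "\<forall>i \<in> I. limitin (T i) (\<lambda>c. f c i) (l i) F" using h by (elim conjE)
  then show ?thesis using assms(2) by (rule bspec)
qed
lemma limitin_prod_ext:
  assumes "limitin (product_topology T I) f l F"
  shows "l \<in> extensional I"
  using limitin_componentwise[THEN iffD1, OF assms(1)] by (elim conjE)

lemma dist_to_zero:
  assumes ms: "Metric_space M d" and cs: "compact_space (Metric_space.mtopology M d)"
  and top: "Metric_space.mtopology M d = product_topology (\<lambda>_. discrete_topology X) \<Gamma>"
  and a: "\<And>n. a n \<in> M" and b: "\<And>n. b n \<in> M"
  and ev: "\<And>\<alpha>. \<alpha>\<in>\<Gamma> \<Longrightarrow> eventually (\<lambda>n. a n \<alpha> = b n \<alpha>) sequentially"
  and e: "e > 0"
  shows "eventually (\<lambda>n. d (a n) (b n) < e) sequentially"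
proof (rule ccontr)
  interpret Metric_space M d by (rule ms)
  assume ne: "\<not> eventually (\<lambda>n. d (a n) (b n) < e) sequentially"
  have "infinite {n. \<not> d (a n) (b n) < e}"
    using ne by (simp add: eventually_cofinite flip: cofinite_eq_sequentially)
  then obtain r :: "nat \<Rightarrow> nat" where r: "strict_mono r" "\<And>n. \<not> d (a (r n)) (b (r n)) < e"
    using infinite_enumerate by blast
  have "range (a \<circ> r) \<subseteq> M" using a by auto
  then obtain l and r2 :: "nat \<Rightarrow> nat" where l: "l \<in> M" "strict_mono r2" "limitin mtopology (a \<circ> r \<circ> r2) l sequentially"
    using cs unfolding compact_space_sequentially by blast
  define s where "s = r \<circ> r2"
  have s: "strict_mono s" using r l unfolding s_def by (simp add: strict_mono_o)
  have la: "limitin mtopology (\<lambda>n. a (s n)) l sequentially"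
    using l(3) by (simp add: s_def o_def)
  have lb: "limitin mtopology (\<lambda>n. b (s n)) l sequentially"
  proof -
    have tp: "topspace (product_topology (\<lambda>_. discrete_topology X) \<Gamma>) = M"
      by (metis top topspace_mtopology)
    have L: "limitin (product_topology (\<lambda>_. discrete_topology X) \<Gamma>) (\<lambda>n. a (s n)) l sequentially"
      using la[unfolded top] .
    have "limitin (product_topology (\<lambda>_. discrete_topology X) \<Gamma>) (\<lambda>n. b (s n)) l sequentially"
      unfolding limitin_componentwise
    proof (intro conjI ballI)
      show "l \<in> extensional \<Gamma>" using L by (rule limitin_prod_ext)
      show "\<forall>\<^sub>F n in sequentially. b (s n) \<in> topspace (product_topology (\<lambda>_. discrete_topology X) \<Gamma>)"
        apply (rule always_eventually) apply (subst tp) apply (rule allI) apply (rule b) done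
      fix i assume i: "i \<in> \<Gamma>"
      have "limitin (discrete_topology X) (\<lambda>c. a (s c) i) (l i) sequentially"
        using L i by (rule limitin_prod_comp)
      then have 1: "l i \<in> X \<and> eventually (\<lambda>n. a (s n) i = l i) sequentially"
        by (rule limitin_discrete_ev2)
      have 2: "eventually (\<lambda>n. a (s n) i = b (s n) i) sequentially"
        using eventually_subseq[OF s ev[OF i]] .
      have 3: "eventually (\<lambda>n. b (s n) i = l i) sequentially"
        using conjunct2[OF 1] 2 by (rule eventually_elim2) simp
      show "limitin (discrete_topology X) (\<lambda>c. b (s c) i) (l i) sequentially"
        by (rule limitin_discrete_ev[OF conjunct1[OF 1] 3])
    qed
    then show ?thesis unfolding top .
  qed
  have "eventually (\<lambda>n. d (a (s n)) l < e/2) sequentially"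
    using la[unfolded limitin_metric] e by (auto dest!: spec[of _ "e/2"] elim: eventually_mono)
  moreover have "eventually (\<lambda>n. d (b (s n)) l < e/2) sequentially"
    using lb[unfolded limitin_metric] e by (auto dest!: spec[of _ "e/2"] elim: eventually_mono)
  ultimately obtain n where n: "d (a (s n)) l < e/2" "d (b (s n)) l < e/2"
    using eventually_happens' [of sequentially] by (metis (mono_tags, lifting) eventually_conj_iff sequentially_bot eventually_happens)
  have "d (a (s n)) (b (s n)) \<le> d (a (s n)) l + d l (b (s n))"
    using triangle a b l(1) by blast
  then have "d (a (s n)) (b (s n)) < e" using n commute[of l "b (s n)"] by linarith
  moreover have "\<not> d (a (s n)) (b (s n)) < e" using r(2)[of "r2 n"] by (simp add: s_def)
  ultimately show False by simp
qed



definition asym :: "('b \<Rightarrow> 'b) \<Rightarrow> ('b \<Rightarrow> 'b \<Rightarrow> real) \<Rightarrow> 'b \<Rightarrow> 'b \<Rightarrow> bool" where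
  "asym f d p q \<longleftrightarrow> (\<forall>e>0. eventually (\<lambda>n. d ((f^^n) p) ((f^^n) q) < e) sequentially)"

lemma xi_le: "xi f d p q t n \<le> n"
proof -
  have "xi f d p q t n \<le> card {0..<n}" unfolding xi_def by (rule card_mono) auto
  then show ?thesis by simp
qed

lemma ratio_le1: "real (xi f d p q t n) / real n \<le> 1"
proof (cases "n = 0")
  case False
  then show ?thesis using xi_le[of f d p q t n] by (simp add: divide_le_eq_1)
qed simp

lemma Fup_le1: "Fup f d p q t \<le> 1"
  unfolding Fup_def by (rule Limsup_bounded) (simp add: ratio_le1)

lemma Flow_ge0: "0 \<le> Flow f d p q t"
  unfolding Flow_def by (rule Liminf_bounded) simp

lemma Flow_self:
  assumes "\<And>n. d ((f^^n) p) ((f^^n) p) = 0" "t > 0"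
  shows "Flow f d p p t = 1"
proof -
  have "xi f d p p t n = n" for n unfolding xi_def using assms by simp
  then have "eventually (\<lambda>n. 1 \<le> ereal (real (xi f d p p t n) / real n)) sequentially"
    unfolding eventually_sequentially by (intro exI[of _ 1]) auto
  then have "1 \<le> Flow f d p p t" unfolding Flow_def by (rule Liminf_bounded)
  moreover have "Flow f d p p t \<le> Fup f d p p t" unfolding Flow_def Fup_def
    by (rule Liminf_le_Limsup) simp
  ultimately show ?thesis using Fup_le1[of f d p p t] by simp
qed

lemma ratio_limits:
  fixes a b :: "nat \<Rightarrow> real" and N :: nat
  assumes "\<And>n. a n \<le> b n + real N / real n"
  shows "liminf (\<lambda>n. ereal (a n)) \<le> liminf (\<lambda>n. ereal (b n)) \<and>
         limsup (\<lambda>n. ereal (a n)) \<le> limsup (\<lambda>n. ereal (b n))"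
proof -
  have t: "(\<lambda>n. ereal (real N / real n)) \<longlonglongrightarrow> ereal 0"
    by (intro tendsto_ereal lim_const_over_n)
  have le: "eventually (\<lambda>n. ereal (a n) \<le> ereal (real N / real n) + ereal (b n)) sequentially"
    using assms by (simp add: add.commute)
  have "liminf (\<lambda>n. ereal (a n)) \<le> liminf (\<lambda>n. ereal (real N / real n) + ereal (b n))"
    using le by (rule Liminf_mono)
  also have "\<dots> = ereal 0 + liminf (\<lambda>n. ereal (b n))"
    by (rule ereal_liminf_lim_add[OF t]) simp
  finally have 1: "liminf (\<lambda>n. ereal (a n)) \<le> liminf (\<lambda>n. ereal (b n))" by simp
  have "limsup (\<lambda>n. ereal (a n)) \<le> limsup (\<lambda>n. ereal (real N / real n) + ereal (b n))"
    using le by (rule Limsup_mono)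
  also have "\<dots> = ereal 0 + limsup (\<lambda>n. ereal (b n))"
    by (rule ereal_limsup_lim_add[OF t]) simp
  finally have 2: "limsup (\<lambda>n. ereal (a n)) \<le> limsup (\<lambda>n. ereal (b n))" by simp
  show ?thesis using 1 2 by simp
qed

lemma cmp:
  assumes ms: "Metric_space M d" and orb: "\<And>w n. w \<in> M \<Longrightarrow> (f^^n) w \<in> M"
    and M: "p\<in>M" "q\<in>M" "p'\<in>M" "q'\<in>M"
    and ap: "asym f d p p'" and aq: "asym f d q q'" and e: "e>0"
  shows "Flow f d p q t \<le> Flow f d p' q' (t+e) \<and> Fup f d p q t \<le> Fup f d p' q' (t+e)"
proof -
  interpret Metric_space M d by (rule ms)
  have e2: "e/2 > 0" using e by simp
  have "eventually (\<lambda>n. d ((f^^n) p) ((f^^n) p') < e/2) sequentially"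
    using ap e2 unfolding asym_def by blast
  moreover have "eventually (\<lambda>n. d ((f^^n) q) ((f^^n) q') < e/2) sequentially"
    using aq e2 unfolding asym_def by blast
  ultimately have "eventually (\<lambda>n. d ((f^^n) p) ((f^^n) p') < e/2 \<and> d ((f^^n) q) ((f^^n) q') < e/2) sequentially"
    by (rule eventually_conj)
  then obtain N where N: "\<And>n. n \<ge> N \<Longrightarrow> d ((f^^n) p) ((f^^n) p') < e/2 \<and> d ((f^^n) q) ((f^^n) q') < e/2"
    unfolding eventually_sequentially by blast
  have imp: "d ((f^^n) p') ((f^^n) q') < t + e" if "n \<ge> N" "d ((f^^n) p) ((f^^n) q) < t" for n
  proof -
    have m: "(f^^n) p \<in> M" "(f^^n) q \<in> M" "(f^^n) p' \<in> M" "(f^^n) q' \<in> M" using orb M by auto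
    have "d ((f^^n) p') ((f^^n) q') \<le> d ((f^^n) p') ((f^^n) p) + d ((f^^n) p) ((f^^n) q')"
      using triangle m by blast
    moreover have "d ((f^^n) p) ((f^^n) q') \<le> d ((f^^n) p) ((f^^n) q) + d ((f^^n) q) ((f^^n) q')"
      using triangle m by blast
    moreover have "d ((f^^n) p') ((f^^n) p) = d ((f^^n) p) ((f^^n) p')" by (rule commute)
    ultimately show ?thesis using N[OF that(1)] that(2) by linarith
  qed
  have xi: "xi f d p q t n \<le> xi f d p' q' (t+e) n + N" for n
  proof -
    have "{i \<in> {0..<n}. d ((f ^^ i) p) ((f ^^ i) q) < t} \<subseteq>
          {i \<in> {0..<n}. d ((f ^^ i) p') ((f ^^ i) q') < t + e} \<union> {0..<N}"
      using imp by force
    then have "xi f d p q t n \<le> card ({i \<in> {0..<n}. d ((f ^^ i) p') ((f ^^ i) q') < t + e} \<union> {0..<N})"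
      unfolding xi_def by (intro card_mono) auto
    also have "\<dots> \<le> xi f d p' q' (t+e) n + card {0..<N}" unfolding xi_def by (rule card_Un_le)
    finally show ?thesis by simp
  qed
  have r: "real (xi f d p q t n) / real n \<le> real (xi f d p' q' (t+e) n) / real n + real N / real n" for n
  proof -
    have "real (xi f d p q t n) \<le> real (xi f d p' q' (t+e) n) + real N" using xi[of n] by linarith
    then have "real (xi f d p q t n) / real n \<le> (real (xi f d p' q' (t+e) n) + real N) / real n"
      by (rule divide_right_mono) simp
    then show ?thesis by (simp add: add_divide_distrib)
  qed
  show ?thesis unfolding Flow_def Fup_def by (rule ratio_limits[OF r])
qed



lemma phi_pow_in: "\<phi> ` \<Gamma> \<subseteq> \<Gamma> \<Longrightarrow> \<alpha> \<in> \<Gamma> \<Longrightarrow> (\<phi>^^n) \<alpha> \<in> \<Gamma>"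
  by (induction n) auto

lemma gshift_pow:
  assumes "\<phi> ` \<Gamma> \<subseteq> \<Gamma>" "\<alpha> \<in> \<Gamma>"
  shows "(gshift \<Gamma> \<phi> ^^ n) w \<alpha> = w ((\<phi>^^n) \<alpha>)"
  using assms(2)
proof (induction n arbitrary: \<alpha>)
  case 0 then show ?case by simp
next
  case (Suc n)
  have "\<phi> \<alpha> \<in> \<Gamma>" using assms(1) Suc.prems by auto
  then have "(gshift \<Gamma> \<phi> ^^ n) w (\<phi> \<alpha>) = w ((\<phi>^^n) (\<phi> \<alpha>))" by (rule Suc.IH)
  have "(gshift \<Gamma> \<phi> ^^ Suc n) w \<alpha> = gshift \<Gamma> \<phi> ((gshift \<Gamma> \<phi> ^^ n) w) \<alpha>" by simp
  also have "\<dots> = (gshift \<Gamma> \<phi> ^^ n) w (\<phi> \<alpha>)" using Suc.prems by (simp add: gshift_def)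
  also have "\<dots> = w ((\<phi>^^n) (\<phi> \<alpha>))" by fact
  also have "\<dots> = w ((\<phi>^^Suc n) \<alpha>)" by (simp only: funpow_Suc_right comp_apply)
  finally show ?case .
qed

lemma gshift_in:
  assumes "\<phi> ` \<Gamma> \<subseteq> \<Gamma>" "w \<in> PiE \<Gamma> (\<lambda>_. X)"
  shows "gshift \<Gamma> \<phi> w \<in> PiE \<Gamma> (\<lambda>_. X)"
  using assms unfolding gshift_def by (auto simp: PiE_def Pi_def extensional_def)

lemma gshift_pow_in:
  assumes "\<phi> ` \<Gamma> \<subseteq> \<Gamma>" "w \<in> PiE \<Gamma> (\<lambda>_. X)"
  shows "(gshift \<Gamma> \<phi> ^^ n) w \<in> PiE \<Gamma> (\<lambda>_. X)"
  by (induction n) (simp_all add: assms gshift_in[OF assms(1)])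

lemma periodic_finite:
  assumes "(\<phi>^^k) \<theta> = \<theta>" "k > 0"
  shows "\<not> non_quasi_periodic \<phi> \<theta>"
proof -
  have q: "(\<phi>^^(q*k)) \<theta> = \<theta>" for q
  proof (induction q)
    case (Suc q)
    have "(\<phi>^^(Suc q * k)) \<theta> = (\<phi>^^k) ((\<phi>^^(q*k)) \<theta>)" by (simp add: funpow_add)
    then show ?case using Suc assms(1) by simp
  qed simp
  have "{(\<phi> ^^ n) \<theta> | n. True} \<subseteq> (\<lambda>j. (\<phi>^^j) \<theta>) ` {..<k}"
  proof
    fix z assume "z \<in> {(\<phi> ^^ n) \<theta> | n. True}"
    then obtain n where z: "z = (\<phi>^^n) \<theta>" by blast
    have "n = n mod k + (n div k) * k" by simp
    then have "(\<phi>^^n) \<theta> = (\<phi>^^(n mod k)) ((\<phi>^^((n div k)*k)) \<theta>)"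
      by (metis funpow_add comp_apply)
    then have "z = (\<phi>^^(n mod k)) \<theta>" using q z by simp
    moreover have "n mod k < k" using assms(2) by simp
    ultimately show "z \<in> (\<lambda>j. (\<phi>^^j) \<theta>) ` {..<k}" by blast
  qed
  then have "finite {(\<phi> ^^ n) \<theta> | n. True}" by (rule finite_subset) simp
  then show ?thesis unfolding non_quasi_periodic_def by simp
qed

lemma nqp_once:
  assumes "non_quasi_periodic \<phi> \<theta>" "(\<phi>^^n) \<alpha> = \<theta>" "(\<phi>^^m) \<alpha> = \<theta>"
  shows "n = m"
proof (rule ccontr)
  assume ne: "n \<noteq> m"
  have *: "(\<phi>^^(b - a)) \<theta> = \<theta>" if "a < b" "(\<phi>^^a) \<alpha> = \<theta>" "(\<phi>^^b) \<alpha> = \<theta>" for a b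
  proof -
    have "b = (b - a) + a" using that by simp
    then have "(\<phi>^^b) \<alpha> = (\<phi>^^(b-a)) ((\<phi>^^a) \<alpha>)" by (metis funpow_add comp_apply)
    then show ?thesis using that by simp
  qed
  show False
  proof (cases "n < m")
    case True
    then show False using *[OF True assms(2,3)] periodic_finite assms(1) by (metis zero_less_diff)
  next
    case False
    then have "m < n" using ne by simp
    then show False using *[OF _ assms(3,2)] periodic_finite assms(1) by (metis zero_less_diff)
  qed
qed

lemma finite_hits:
  assumes "finite S" "\<And>\<theta>. \<theta> \<in> S \<Longrightarrow> non_quasi_periodic \<phi> \<theta>"
  shows "finite {n. (\<phi>^^n) \<alpha> \<in> S}"
proof -
  have "{n. (\<phi>^^n) \<alpha> \<in> S} = (\<Union>\<theta>\<in>S. {n. (\<phi>^^n) \<alpha> = \<theta>})" by auto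
  moreover have "finite {n. (\<phi>^^n) \<alpha> = \<theta>}" if "\<theta> \<in> S" for \<theta>
  proof (cases "\<exists>n0. (\<phi>^^n0) \<alpha> = \<theta>")
    case True
    then obtain n0 where n0: "(\<phi>^^n0) \<alpha> = \<theta>" by blast
    have "{n. (\<phi>^^n) \<alpha> = \<theta>} \<subseteq> {n0}" using nqp_once[OF assms(2)[OF that] _ n0] by blast
    then show ?thesis by (rule finite_subset) simp
  qed simp
  ultimately show ?thesis using assms(1) by simp
qed

lemma asym_y:
  assumes ms: "Metric_space (PiE \<Gamma> (\<lambda>_. X)) d"
    and top: "Metric_space.mtopology (PiE \<Gamma> (\<lambda>_. X)) d = product_topology (\<lambda>_. discrete_topology X) \<Gamma>"
    and Xf: "finite X" and phi: "\<phi> ` \<Gamma> \<subseteq> \<Gamma>"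
    and x: "x \<in> PiE \<Gamma> (\<lambda>_. X)" and x': "x' \<in> PiE \<Gamma> (\<lambda>_. X)"
    and fin: "finite {\<alpha> \<in> \<Gamma>. x \<alpha> \<noteq> x' \<alpha>}"
    and nqp: "\<And>\<alpha>. \<alpha> \<in> \<Gamma> \<Longrightarrow> x \<alpha> \<noteq> x' \<alpha> \<Longrightarrow> non_quasi_periodic \<phi> \<alpha>"
  shows "asym (gshift \<Gamma> \<phi>) d x x'"
  unfolding asym_def
proof (intro allI impI)
  fix e :: real assume e: "e > 0"
  have cs: "compact_space (Metric_space.mtopology (PiE \<Gamma> (\<lambda>_. X)) d)"
    unfolding top compact_space_product_topology using Xf by (simp add: compact_space_discrete_topology)
  show "eventually (\<lambda>n. d ((gshift \<Gamma> \<phi> ^^ n) x) ((gshift \<Gamma> \<phi> ^^ n) x') < e) sequentially"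
  proof (rule dist_to_zero[OF ms cs top _ _ _ e])
    show "(gshift \<Gamma> \<phi> ^^ n) x \<in> PiE \<Gamma> (\<lambda>_. X)" for n by (rule gshift_pow_in[OF phi x])
    show "(gshift \<Gamma> \<phi> ^^ n) x' \<in> PiE \<Gamma> (\<lambda>_. X)" for n by (rule gshift_pow_in[OF phi x'])
    fix \<alpha> assume a: "\<alpha> \<in> \<Gamma>"
    let ?S = "{\<alpha> \<in> \<Gamma>. x \<alpha> \<noteq> x' \<alpha>}"
    have "finite {n. (\<phi>^^n) \<alpha> \<in> ?S}" using fin nqp by (intro finite_hits) auto
    moreover have "{n. \<not> (gshift \<Gamma> \<phi> ^^ n) x \<alpha> = (gshift \<Gamma> \<phi> ^^ n) x' \<alpha>} \<subseteq> {n. (\<phi>^^n) \<alpha> \<in> ?S}"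
      by (auto simp: gshift_pow[OF phi a] phi_pow_in[OF phi a])
    ultimately have "finite {n. \<not> (gshift \<Gamma> \<phi> ^^ n) x \<alpha> = (gshift \<Gamma> \<phi> ^^ n) x' \<alpha>}"
      by (rule finite_subset[rotated])
    then show "eventually (\<lambda>n. (gshift \<Gamma> \<phi> ^^ n) x \<alpha> = (gshift \<Gamma> \<phi> ^^ n) x' \<alpha>) sequentially"
      by (simp add: eventually_cofinite flip: cofinite_eq_sequentially)
  qed
qed



lemma set_transfer:
  assumes DM: "D \<subseteq> M"
    and tr: "\<And>x z. x\<in>M \<Longrightarrow> z\<in>M \<Longrightarrow> P x z \<longleftrightarrow> P (y x) (y z)"
    and dif: "\<And>x z. x\<in>M \<Longrightarrow> z\<in>M \<Longrightarrow> x\<noteq>z \<Longrightarrow> P x z \<Longrightarrow> y x \<noteq> y z"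
  shows "((\<exists>x\<in>D. \<exists>z\<in>D. x\<noteq>z) \<and> (\<forall>x\<in>D. \<forall>z\<in>D. x\<noteq>z \<longrightarrow> P x z)) \<longleftrightarrow>
     inj_on y D \<and> ((\<exists>x\<in>y`D. \<exists>z\<in>y`D. x\<noteq>z) \<and> (\<forall>x\<in>y`D. \<forall>z\<in>y`D. x\<noteq>z \<longrightarrow> P x z))"
proof (intro iffI conjI)
  assume L: "(\<exists>x\<in>D. \<exists>z\<in>D. x\<noteq>z) \<and> (\<forall>x\<in>D. \<forall>z\<in>D. x\<noteq>z \<longrightarrow> P x z)"
  then have L1: "\<exists>x\<in>D. \<exists>z\<in>D. x\<noteq>z" and L2: "\<And>x z. x\<in>D \<Longrightarrow> z\<in>D \<Longrightarrow> x\<noteq>z \<Longrightarrow> P x z"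
    by auto
  show inj: "inj_on y D"
  proof (rule inj_onI, rule ccontr)
    fix x z assume xz: "x \<in> D" "z \<in> D" "y x = y z" "x \<noteq> z"
    have "P x z" using L2 xz by simp
    then have "y x \<noteq> y z" using dif DM xz by auto
    then show False using xz by simp
  qed
  show "\<exists>x\<in>y`D. \<exists>z\<in>y`D. x\<noteq>z"
  proof -
    obtain x z where xz: "x\<in>D" "z\<in>D" "x\<noteq>z" using L1 by auto
    then have "y x \<noteq> y z" using inj by (auto dest: inj_onD)
    then show ?thesis using xz by auto
  qed
  show "\<forall>x\<in>y`D. \<forall>z\<in>y`D. x\<noteq>z \<longrightarrow> P x z"
  proof (intro ballI impI)
    fix a b assume ab: "a \<in> y`D" "b \<in> y`D" "a \<noteq> b"
    then obtain x z where xz: "x\<in>D" "z\<in>D" "a = y x" "b = y z" by auto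
    then have "x \<noteq> z" using ab by auto
    then have "P x z" using L2 xz by simp
    then show "P a b" using tr DM xz by auto
  qed
next
  assume R: "inj_on y D \<and> ((\<exists>x\<in>y`D. \<exists>z\<in>y`D. x\<noteq>z) \<and> (\<forall>x\<in>y`D. \<forall>z\<in>y`D. x\<noteq>z \<longrightarrow> P x z))"
  then have R0: "inj_on y D" and R1: "\<exists>x\<in>y`D. \<exists>z\<in>y`D. x\<noteq>z"
    and R2: "\<And>a b. a\<in>y`D \<Longrightarrow> b\<in>y`D \<Longrightarrow> a\<noteq>b \<Longrightarrow> P a b" by auto
  show "\<exists>x\<in>D. \<exists>z\<in>D. x\<noteq>z"
  proof -
    obtain x z where "x \<in> D" "z \<in> D" "y x \<noteq> y z" using R1 by auto
    then show ?thesis by metis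
  qed
  show "\<forall>x\<in>D. \<forall>z\<in>D. x\<noteq>z \<longrightarrow> P x z"
  proof (intro ballI impI)
    fix x z assume xz: "x\<in>D" "z\<in>D" "x\<noteq>z"
    then have "y x \<noteq> y z" using R0 by (auto dest: inj_onD)
    then have "P (y x) (y z)" using R2 xz by auto
    then show "P x z" using tr DM xz by auto
  qed
qed

theorem corollary4p3:
  fixes X :: "'a set" and \<Gamma> :: "'g set" and \<phi> :: "'g \<Rightarrow> 'g"
    and d :: "('g \<Rightarrow> 'a) \<Rightarrow> ('g \<Rightarrow> 'a) \<Rightarrow> real"
    and y :: "('g \<Rightarrow> 'a) \<Rightarrow> ('g \<Rightarrow> 'a)"
    and D :: "('g \<Rightarrow> 'a) set" and u v :: "'g \<Rightarrow> 'a"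
  assumes X_fin: "finite X" and X_two: "card X \<ge> 2"
    and \<Gamma>_ne: "\<Gamma> \<noteq> {}" and \<Gamma>_count: "countable \<Gamma>"
    and \<phi>_map: "\<phi> ` \<Gamma> \<subseteq> \<Gamma>"
    and d_comp: "compatible_metric \<Gamma> X d"
    and y_in: "\<And>x. x \<in> full_space \<Gamma> X \<Longrightarrow> y x \<in> full_space \<Gamma> X"
    and y_fin: "\<And>x. x \<in> full_space \<Gamma> X \<Longrightarrow> finite {\<alpha> \<in> \<Gamma>. x \<alpha> \<noteq> y x \<alpha>}"
    and y_nqp: "\<And>x \<alpha>. x \<in> full_space \<Gamma> X \<Longrightarrow> \<alpha> \<in> \<Gamma> \<Longrightarrow> x \<alpha> \<noteq> y x \<alpha> \<Longrightarrow> non_quasi_periodic \<phi> \<alpha>"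
    and D_sub: "D \<subseteq> full_space \<Gamma> X"
    and u_in: "u \<in> full_space \<Gamma> X" and v_in: "v \<in> full_space \<Gamma> X"
  shows "((\<forall>t>0. Fup (gshift \<Gamma> \<phi>) d u v t = 1) \<longleftrightarrow> (\<forall>t>0. Fup (gshift \<Gamma> \<phi>) d (y u) (y v) t = 1))
    \<and> ((\<exists>t>0. \<forall>x\<in>D. \<forall>z\<in>D. x \<noteq> z \<longrightarrow> Flow (gshift \<Gamma> \<phi>) d x z t = 0) \<longleftrightarrow>
       (\<exists>t>0. \<forall>x\<in>D. \<forall>z\<in>D. x \<noteq> z \<longrightarrow> Flow (gshift \<Gamma> \<phi>) d (y x) (y z) t = 0))
    \<and> ((\<exists>t>0. \<forall>x\<in>D. \<forall>z\<in>D. x \<noteq> z \<longrightarrow> Flow (gshift \<Gamma> \<phi>) d x z t < 1) \<longleftrightarrow>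
       (\<exists>t>0. \<forall>x\<in>D. \<forall>z\<in>D. x \<noteq> z \<longrightarrow> Flow (gshift \<Gamma> \<phi>) d (y x) (y z) t < 1))
    \<and> (DS1_set (gshift \<Gamma> \<phi>) d D \<longleftrightarrow> inj_on y D \<and> DS1_set (gshift \<Gamma> \<phi>) d (y ` D))
    \<and> (DS2_set (gshift \<Gamma> \<phi>) d D \<longleftrightarrow> inj_on y D \<and> DS2_set (gshift \<Gamma> \<phi>) d (y ` D))"
proof -
  define M where "M = full_space \<Gamma> X"
  define f :: "('g \<Rightarrow> 'a) \<Rightarrow> ('g \<Rightarrow> 'a)" where "f = gshift \<Gamma> \<phi>"
  have ms: "Metric_space M d" and top: "Metric_space.mtopology M d = product_topology (\<lambda>_. discrete_topology X) \<Gamma>"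
    using d_comp unfolding compatible_metric_def M_def by auto
  have orb: "\<And>w n. w \<in> M \<Longrightarrow> (f^^n) w \<in> M"
    unfolding M_def f_def by (rule gshift_pow_in[OF \<phi>_map])
  have AY: "asym f d x (y x)" if "x \<in> M" for x
    unfolding f_def
    by (rule asym_y[OF ms[unfolded M_def] top[unfolded M_def] X_fin \<phi>_map])
       (use that y_in y_fin y_nqp in \<open>auto simp: M_def\<close>)
  have YA: "asym f d (y x) x" if "x \<in> M" for x
  proof -
    have "{\<alpha> \<in> \<Gamma>. y x \<alpha> \<noteq> x \<alpha>} = {\<alpha> \<in> \<Gamma>. x \<alpha> \<noteq> y x \<alpha>}" by auto
    then show ?thesis unfolding f_def
      by (intro asym_y[OF ms[unfolded M_def] top[unfolded M_def] X_fin \<phi>_map])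
         (use that y_in y_fin y_nqp in \<open>auto simp: M_def\<close>)
  qed
  have yM: "y x \<in> M" if "x \<in> M" for x using y_in that unfolding M_def by simp
  have ka: "Flow f d x z t \<le> Flow f d (y x) (y z) (t+e) \<and> Fup f d x z t \<le> Fup f d (y x) (y z) (t+e)"
    if "x \<in> M" "z \<in> M" "e > 0" for x z t e
    using cmp[OF ms orb that(1,2) yM[OF that(1)] yM[OF that(2)] AY[OF that(1)] AY[OF that(2)] that(3)] .
  have kb: "Flow f d (y x) (y z) t \<le> Flow f d x z (t+e) \<and> Fup f d (y x) (y z) t \<le> Fup f d x z (t+e)"
    if "x \<in> M" "z \<in> M" "e > 0" for x z t e
    using cmp[OF ms orb yM[OF that(1)] yM[OF that(2)] that(1,2) YA[OF that(1)] YA[OF that(2)] that(3)] .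
  have half: "t/2 + t/2 = t" for t :: real by simp
  have up: "(\<forall>t>0. Fup f d x z t = 1) \<longleftrightarrow> (\<forall>t>0. Fup f d (y x) (y z) t = 1)" if "x\<in>M" "z\<in>M" for x z
  proof safe
    fix t :: real assume A: "\<forall>t>0. Fup f d x z t = 1" and t: "t > 0"
    have "Fup f d x z (t/2) \<le> Fup f d (y x) (y z) t" using ka[OF that, of "t/2" "t/2"] t by (simp only: half; simp)
    then show "Fup f d (y x) (y z) t = 1" using A t Fup_le1[of f d "y x" "y z" t] by simp
  next
    fix t :: real assume A: "\<forall>t>0. Fup f d (y x) (y z) t = 1" and t: "t > 0"
    have "Fup f d (y x) (y z) (t/2) \<le> Fup f d x z t" using kb[OF that, of "t/2" "t/2"] t by (simp only: half; simp)
    then show "Fup f d x z t = 1" using A t Fup_le1[of f d x z t] by simp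
  qed
  have lo0: "(\<exists>s>0. Flow f d x z s = 0) \<longleftrightarrow> (\<exists>s>0. Flow f d (y x) (y z) s = 0)" if "x\<in>M" "z\<in>M" for x z
  proof safe
    fix s :: real assume s: "s > 0" "Flow f d x z s = 0"
    have "Flow f d (y x) (y z) (s/2) \<le> Flow f d x z s" using kb[OF that, of "s/2" "s/2"] s by (simp only: half; simp)
    then show "\<exists>s>0. Flow f d (y x) (y z) s = 0" using s Flow_ge0[of f d "y x" "y z" "s/2"]
      by (intro exI[of _ "s/2"]) simp
  next
    fix s :: real assume s: "s > 0" "Flow f d (y x) (y z) s = 0"
    have "Flow f d x z (s/2) \<le> Flow f d (y x) (y z) s" using ka[OF that, of "s/2" "s/2"] s by (simp only: half; simp)
    then show "\<exists>s>0. Flow f d x z s = 0" using s Flow_ge0[of f d x z "s/2"]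
      by (intro exI[of _ "s/2"]) simp
  qed
  have lo1: "(\<exists>s>0. Flow f d x z s < 1) \<longleftrightarrow> (\<exists>s>0. Flow f d (y x) (y z) s < 1)" if "x\<in>M" "z\<in>M" for x z
  proof safe
    fix s :: real assume s: "s > 0" "Flow f d x z s < 1"
    have "Flow f d (y x) (y z) (s/2) \<le> Flow f d x z s" using kb[OF that, of "s/2" "s/2"] s by (simp only: half; simp)
    then show "\<exists>s>0. Flow f d (y x) (y z) s < 1" using s
      by (intro exI[of _ "s/2"]) simp
  next
    fix s :: real assume s: "s > 0" "Flow f d (y x) (y z) s < 1"
    have "Flow f d x z (s/2) \<le> Flow f d (y x) (y z) s" using ka[OF that, of "s/2" "s/2"] s by (simp only: half; simp)
    then show "\<exists>s>0. Flow f d x z s < 1" using s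
      by (intro exI[of _ "s/2"]) simp
  qed
  have dif: "y x \<noteq> y z" if xM: "x\<in>M" and zM: "z\<in>M" and ne: "x \<noteq> z" and ex: "\<exists>s>0. Flow f d x z s < 1" for x z
  proof
    assume eq: "y x = y z"
    obtain s where s: "s > 0" "Flow f d x z s < 1" using ex by blast
    interpret Metric_space M d by (rule ms)
    have "Flow f d (y x) (y x) (s/2) = 1"
      by (rule Flow_self) (use s orb yM[OF xM] in auto)
    moreover have "Flow f d (y x) (y x) (s/2) \<le> Flow f d x z (s/2 + s/2)"
    proof -
      have aq: "asym f d (y x) z" using YA[OF zM] eq by simp
      have "s/2 > 0" using s(1) by simp
      from conjunct1[OF cmp[OF ms orb yM[OF xM] yM[OF xM] xM zM YA[OF xM] aq this, of "s/2"]]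
      show ?thesis .
    qed
    ultimately show False using s by simp
  qed
  have t1: "DS1_pair f d x z \<longleftrightarrow> DS1_pair f d (y x) (y z)" if "x\<in>M" "z\<in>M" for x z
    unfolding DS1_pair_def using lo0[OF that] up[OF that] by blast
  have t2: "DS2_pair f d x z \<longleftrightarrow> DS2_pair f d (y x) (y z)" if "x\<in>M" "z\<in>M" for x z
    unfolding DS2_pair_def using lo1[OF that] up[OF that] by blast
  have d1: "y x \<noteq> y z" if "x\<in>M" "z\<in>M" "x \<noteq> z" "DS1_pair f d x z" for x z
    using dif[OF that(1-3)] that(4) unfolding DS1_pair_def by force
  have d2: "y x \<noteq> y z" if "x\<in>M" "z\<in>M" "x \<noteq> z" "DS2_pair f d x z" for x z
    using dif[OF that(1-3)] that(4) unfolding DS2_pair_def by force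
  have DM: "D \<subseteq> M" using D_sub M_def by simp
  have S1: "DS1_set f d D \<longleftrightarrow> inj_on y D \<and> DS1_set f d (y ` D)"
    unfolding DS1_set_def by (rule set_transfer[where P="DS1_pair f d" and y=y, OF DM t1 d1])
  have S2: "DS2_set f d D \<longleftrightarrow> inj_on y D \<and> DS2_set f d (y ` D)"
    unfolding DS2_set_def by (rule set_transfer[where P="DS2_pair f d" and y=y, OF DM t2 d2])
  have uM: "u \<in> M" "v \<in> M" using u_in v_in M_def by auto
  have P2: "(\<exists>t>0. \<forall>x\<in>D. \<forall>z\<in>D. x \<noteq> z \<longrightarrow> Flow f d x z t = 0) \<longleftrightarrow>
       (\<exists>t>0. \<forall>x\<in>D. \<forall>z\<in>D. x \<noteq> z \<longrightarrow> Flow f d (y x) (y z) t = 0)"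
  proof safe
    fix t :: real assume t: "t > 0" and A: "\<forall>x\<in>D. \<forall>z\<in>D. x \<noteq> z \<longrightarrow> Flow f d x z t = 0"
    show "\<exists>t>0. \<forall>x\<in>D. \<forall>z\<in>D. x \<noteq> z \<longrightarrow> Flow f d (y x) (y z) t = 0"
    proof (intro exI[of _ "t/2"] conjI ballI impI)
      fix x z assume xz: "x \<in> D" "z \<in> D" "x \<noteq> z"
      have "Flow f d (y x) (y z) (t/2) \<le> Flow f d x z t"
        using kb[of x z "t/2" "t/2"] xz DM t by (simp only: half; auto)
      then show "Flow f d (y x) (y z) (t/2) = 0" using A xz Flow_ge0[of f d "y x" "y z" "t/2"] by simp
    qed (use t in simp)
  next
    fix t :: real assume t: "t > 0" and A: "\<forall>x\<in>D. \<forall>z\<in>D. x \<noteq> z \<longrightarrow> Flow f d (y x) (y z) t = 0"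
    show "\<exists>t>0. \<forall>x\<in>D. \<forall>z\<in>D. x \<noteq> z \<longrightarrow> Flow f d x z t = 0"
    proof (intro exI[of _ "t/2"] conjI ballI impI)
      fix x z assume xz: "x \<in> D" "z \<in> D" "x \<noteq> z"
      have "Flow f d x z (t/2) \<le> Flow f d (y x) (y z) t"
        using ka[of x z "t/2" "t/2"] xz DM t by (simp only: half; auto)
      then show "Flow f d x z (t/2) = 0" using A xz Flow_ge0[of f d x z "t/2"] by simp
    qed (use t in simp)
  qed
  have P3: "(\<exists>t>0. \<forall>x\<in>D. \<forall>z\<in>D. x \<noteq> z \<longrightarrow> Flow f d x z t < 1) \<longleftrightarrow>
       (\<exists>t>0. \<forall>x\<in>D. \<forall>z\<in>D. x \<noteq> z \<longrightarrow> Flow f d (y x) (y z) t < 1)"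
  proof safe
    fix t :: real assume t: "t > 0" and A: "\<forall>x\<in>D. \<forall>z\<in>D. x \<noteq> z \<longrightarrow> Flow f d x z t < 1"
    show "\<exists>t>0. \<forall>x\<in>D. \<forall>z\<in>D. x \<noteq> z \<longrightarrow> Flow f d (y x) (y z) t < 1"
    proof (intro exI[of _ "t/2"] conjI ballI impI)
      fix x z assume xz: "x \<in> D" "z \<in> D" "x \<noteq> z"
      have "Flow f d (y x) (y z) (t/2) \<le> Flow f d x z t"
        using kb[of x z "t/2" "t/2"] xz DM t by (simp only: half; auto)
      then show "Flow f d (y x) (y z) (t/2) < 1" using A xz by (meson order_le_less_trans)
    qed (use t in simp)
  next
    fix t :: real assume t: "t > 0" and A: "\<forall>x\<in>D. \<forall>z\<in>D. x \<noteq> z \<longrightarrow> Flow f d (y x) (y z) t < 1"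
    show "\<exists>t>0. \<forall>x\<in>D. \<forall>z\<in>D. x \<noteq> z \<longrightarrow> Flow f d x z t < 1"
    proof (intro exI[of _ "t/2"] conjI ballI impI)
      fix x z assume xz: "x \<in> D" "z \<in> D" "x \<noteq> z"
      have "Flow f d x z (t/2) \<le> Flow f d (y x) (y z) t"
        using ka[of x z "t/2" "t/2"] xz DM t by (simp only: half; auto)
      then show "Flow f d x z (t/2) < 1" using A xz by (meson order_le_less_trans)
    qed (use t in simp)
  qed
  show ?thesis using up[OF uM] P2 P3 S1 S2 unfolding f_def by blast
qed

end
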